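(* Let $n>3$ be odd. Let $H_n$ be the bipartite graph with vertex classes $A=\{a_0,\dots,a_{n-1}\}$ and $B=\{b_0,\dots,b_{n-1}\}$ whose edge set is $M_0\cup M_1\cup M_2$, where $M_j=\{a_ib_{i+j}: 0\le i\le n-1\}$ with indices modulo $n$. Then $H_n$ is $3$-regular, for any two distinct $j,j'\in\{0,1,2\}$ the graph $M_j\cup M_{j'}$ is a Hamilton cycle of $H_n$, and $m(H_n)=4$.
   Context: All graphs are finite and simple. For graphs $G_1=(V,E_1)$, $G_2=(V,E_2)$, their symmetric difference is $(V,E_1\oplus E_2)$, where $E_1\oplus E_2$ is the set of edges in exactly one of $E_1,E_2$. A connectivity code for $H=(V,E)$ is a collection of distinct spanning subgraphs $(V,E')$, $E'\subseteq E$, such that the symmetric difference of any two distinct members is a connected graph on $V$; $m(H)$ is the maximum cardinality of a connectivity code for $H$. *)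

theory Defs
  imports Main
begin

definition simple_graph :: "'a set \<Rightarrow> 'a set set \<Rightarrow> bool" where
  "simple_graph V E \<longleftrightarrow> finite V \<and>
     (\<forall>e\<in>E. \<exists>u v. u \<in> V \<and> v \<in> V \<and> u \<noteq> v \<and> e = {u, v})"

definition degree :: "'a set set \<Rightarrow> 'a \<Rightarrow> nat" where
  "degree E v = card {e\<in>E. v \<in> e}"

definition regular :: "nat \<Rightarrow> 'a set \<Rightarrow> 'a set set \<Rightarrow> bool" where
  "regular k V E \<longleftrightarrow> (\<forall>v\<in>V. degree E v = k)"

definition connected_graph :: "'a set \<Rightarrow> 'a set set \<Rightarrow> bool" where
  "connected_graph V F \<longleftrightarrow> V \<noteq> {} \<and>
     (\<forall>u\<in>V. \<forall>v\<in>V. (\<lambda>x y. {x, y} \<in> F)\<^sup>*\<^sup>* u v)"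

definition hamilton_cycle :: "'a set \<Rightarrow> 'a set set \<Rightarrow> 'a set set \<Rightarrow> bool" where
  "hamilton_cycle V E F \<longleftrightarrow> F \<subseteq> E \<and>
     (\<exists>vs. distinct vs \<and> set vs = V \<and> length vs \<ge> 3 \<and>
        F = {{vs ! k, vs ! ((k + 1) mod length vs)} | k. k < length vs})"

definition sym_diff :: "'b set \<Rightarrow> 'b set \<Rightarrow> 'b set" where
  "sym_diff X Y = (X - Y) \<union> (Y - X)"

definition connectivity_code :: "'a set \<Rightarrow> 'a set set \<Rightarrow> 'a set set set \<Rightarrow> bool" where
  "connectivity_code V E C \<longleftrightarrow> (\<forall>F\<in>C. F \<subseteq> E) \<and>
     (\<forall>F1\<in>C. \<forall>F2\<in>C. F1 \<noteq> F2 \<longrightarrow> connected_graph V (sym_diff F1 F2))"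

definition m_code :: "'a set \<Rightarrow> 'a set set \<Rightarrow> nat" where
  "m_code V E = Max {card C | C. connectivity_code V E C}"

text \<open>The graph H_n: vertices a_i = Inl i, b_i = Inr i for i < n.\<close>
definition Hn_vertices :: "nat \<Rightarrow> (nat + nat) set" where
  "Hn_vertices n = Inl ` {..<n} \<union> Inr ` {..<n}"

definition Mj :: "nat \<Rightarrow> nat \<Rightarrow> (nat + nat) set set" where
  "Mj n j = {{Inl i, Inr ((i + j) mod n)} | i. i < n}"

definition Hn_edges :: "nat \<Rightarrow> (nat + nat) set set" where
  "Hn_edges n = Mj n 0 \<union> Mj n 1 \<union> Mj n 2"

end

theory Submission
  imports Defs
begin


lemma conn_card:
  assumes fF: "finite F" and cg: "connected_graph V F" and fV: "finite V"
  shows "card V \<le> card F + 1"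
proof -
  define R where "R = (\<lambda>x y. {x, y} \<in> F)"
  from cg obtain r where r: "r \<in> V" and reach: "\<forall>v\<in>V. R\<^sup>*\<^sup>* v r"
    unfolding connected_graph_def R_def by blast
  define dist where "dist v = (LEAST k. (R ^^ k) v r)" for v
  have dist_min: "dist v \<le> k" if "(R ^^ k) v r" for v k
    unfolding dist_def using that by (rule Least_le)
  have dist_ok: "(R ^^ dist v) v r" if "v \<in> V" for v
    unfolding dist_def using reach that rtranclp_power by (metis LeastI_ex)
  have ex: "\<exists>w. R v w \<and> dist w < dist v" if "v \<in> V - {r}" for v
  proof (cases "dist v")
    case 0
    then show ?thesis using dist_ok[of v] that by auto
  next
    case (Suc k)
    have "(R ^^ Suc k) v r" using dist_ok[of v] that Suc by auto
    from relpowp_Suc_D2[OF this] obtain w where "R v w" "(R ^^ k) w r"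
      by blast
    then show ?thesis using dist_min Suc by (metis le_imp_less_Suc)
  qed
  define nxt where "nxt v = (SOME w. R v w \<and> dist w < dist v)" for v
  have nxt: "R v (nxt v) \<and> dist (nxt v) < dist v" if "v \<in> V - {r}" for v
    unfolding nxt_def using ex[OF that] by (rule someI_ex)
  have inj: "inj_on (\<lambda>v. {v, nxt v}) (V - {r})"
  proof (rule inj_onI)
    fix u v assume u: "u \<in> V - {r}" and v: "v \<in> V - {r}" and eq: "{u, nxt u} = {v, nxt v}"
    show "u = v"
    proof (rule ccontr)
      assume "u \<noteq> v"
      with eq have "u = nxt v" "v = nxt u" by (auto simp: doubleton_eq_iff)
      then have "dist u < dist v" "dist v < dist u" using nxt[OF u] nxt[OF v] by simp_all
      then show False by simp
    qed
  qed
  have sub: "(\<lambda>v. {v, nxt v}) ` (V - {r}) \<subseteq> F"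
    using nxt unfolding R_def by auto
  have "card (V - {r}) \<le> card F"
    using card_inj_on_le[OF inj sub fF] .
  then show ?thesis using r fV by auto
qed

lemma ham_conn:
  assumes "hamilton_cycle V E F"
  shows "connected_graph V F"
proof -
  obtain vs where d: "distinct vs" and sv: "set vs = V" and l: "length vs \<ge> 3"
    and F: "F = {{vs ! k, vs ! ((k + 1) mod length vs)} | k. k < length vs}"
    using assms unfolding hamilton_cycle_def by blast
  define R where "R = (\<lambda>x y. {x, y} \<in> F)"
  have Rsym: "R x y \<Longrightarrow> R y x" for x y unfolding R_def by (simp add: insert_commute)
  have step: "R (vs ! k) (vs ! (k+1))" if "k + 1 < length vs" for k
    unfolding R_def F using that by force
  have path2: "R\<^sup>*\<^sup>* (vs ! 0) (vs ! k) \<and> R\<^sup>*\<^sup>* (vs ! k) (vs ! 0)" if "k < length vs" for k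
    using that
  proof (induction k)
    case 0 then show ?case by simp
  next
    case (Suc k)
    then have a: "R\<^sup>*\<^sup>* (vs ! 0) (vs ! k)" "R\<^sup>*\<^sup>* (vs ! k) (vs ! 0)" by simp_all
    have b: "R (vs ! k) (vs ! Suc k)" using step[of k] Suc.prems by simp
    show ?case using rtranclp.rtrancl_into_rtrancl[OF a(1) b]
      converse_rtranclp_into_rtranclp[OF Rsym[OF b] a(2)] by simp
  qed
  have path: "R\<^sup>*\<^sup>* (vs ! 0) (vs ! k)" "R\<^sup>*\<^sup>* (vs ! k) (vs ! 0)" if "k < length vs" for k
    using path2[OF that] by simp_all
  show ?thesis unfolding connected_graph_def
  proof (intro conjI ballI)
    show "V \<noteq> {}" using sv l by auto
  next
    fix u v assume "u \<in> V" "v \<in> V"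
    then obtain a b where "a < length vs" "b < length vs" "u = vs ! a" "v = vs ! b"
      using sv by (metis in_set_conv_nth)
    then show "(\<lambda>x y. {x, y} \<in> F)\<^sup>*\<^sup>* u v"
      using path unfolding R_def by (meson rtranclp_trans)
  qed
qed

lemma card_sd:
  assumes "finite A" "finite B"
  shows "card (sym_diff A B) + 2 * card (A \<inter> B) = card A + card B"
proof -
  have "card (sym_diff A B) = card (A - B) + card (B - A)"
    unfolding sym_diff_def using assms by (intro card_Un_disjoint) auto
  moreover have "card (A - B) + card (A \<inter> B) = card A"
    using assms by (metis Diff_Diff_Int card_Diff_subset_Int finite_Int Int_lower1 card_mono le_add_diff_inverse2 card_Diff_subset inf_commute)
  moreover have "card (B - A) + card (A \<inter> B) = card B"
    using assms by (metis Diff_Diff_Int card_Diff_subset_Int finite_Int Int_lower1 card_mono le_add_diff_inverse2 card_Diff_subset inf_commute)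
  ultimately show ?thesis by linarith
qed

lemma card_sd_sum:
  assumes "finite E" "A \<subseteq> E" "B \<subseteq> E"
  shows "card (sym_diff A B) = (\<Sum>e\<in>E. if (e \<in> A) \<noteq> (e \<in> B) then 1 else 0)"
proof -
  have "sym_diff A B = {e \<in> E. (e \<in> A) \<noteq> (e \<in> B)}"
    unfolding sym_diff_def using assms by auto
  then show ?thesis using assms(1) by (simp add: sum.If_cases Int_def)
qed

lemma bool6:
  fixes b1 b2 b3 b4 b5 :: bool
  shows "(if b1 \<noteq> b2 then 1 else 0) + (if b1 \<noteq> b3 then 1 else 0) + (if b1 \<noteq> b4 then 1 else 0)
   + (if b1 \<noteq> b5 then 1 else 0) + (if b2 \<noteq> b3 then 1 else 0) + (if b2 \<noteq> b4 then 1 else 0)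
   + (if b2 \<noteq> b5 then 1 else 0) + (if b3 \<noteq> b4 then 1 else 0) + (if b3 \<noteq> b5 then 1 else 0)
   + (if b4 \<noteq> b5 then 1 else 0) \<le> (6::nat)"
  by (cases b1; cases b2; cases b3; cases b4; cases b5; simp)

lemma bool1:
  fixes b1 b2 b3 b4 b5 :: bool
  shows "(if b1 = b2 then 1 else 0) + (if b1 = b3 then 1 else 0) + (if b1 = b4 then 1 else 0)
   + (if b1 = b5 then 1 else 0) + (if b2 = b3 then 1 else 0) + (if b2 = b4 then 1 else 0)
   + (if b2 = b5 then 1 else 0) + (if b3 = b4 then 1 else 0) + (if b3 = b5 then 1 else 0)
   + (if b4 = b5 then 1 else 0) \<ge> (1::nat)"
  by (cases b1; cases b2; cases b3; cases b4; cases b5; simp)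



lemma mod2n:
  fixes x n :: nat
  assumes "x < 2 * n"
  shows "x mod n = (if x < n then x else x - n)"
proof (cases "x < n")
  case True then show ?thesis by simp
next
  case False
  then have "x mod n = (x - n) mod n" by (simp add: le_mod_geq)
  also have "\<dots> = x - n" using assms False by simp
  finally show ?thesis using False by simp
qed

lemma modj:
  fixes i j n :: nat
  assumes "i < n" "j \<le> 2" "2 < n"
  shows "(i + j) mod n = (if i + j < n then i + j else i + j - n)"
  using mod2n[of "i+j" n] assms by simp

lemma inv_mod:
  fixes i j n k :: nat
  assumes "i < n" "j \<le> 2" "2 < n" "k < n"
  shows "(i + j) mod n = k \<longleftrightarrow> i = (if j \<le> k then k - j else k + n - j)"
  using modj[OF assms(1-3)] assms by auto

lemma Mj_Inl:
  assumes "i < n" "j \<le> 2" "2 < n"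
  shows "{e \<in> Mj n j. Inl i \<in> e} = {{Inl i, Inr ((i + j) mod n)}}"
  unfolding Mj_def using assms by auto

lemma Mj_Inr:
  assumes "k < n" "j \<le> 2" "2 < n"
  shows "{e \<in> Mj n j. Inr k \<in> e} = {{Inl (if j \<le> k then k - j else k + n - j), Inr k}}"
proof -
  have "{e \<in> Mj n j. Inr k \<in> e} = {{Inl i, Inr ((i + j) mod n)} | i. i < n \<and> (i + j) mod n = k}"
    unfolding Mj_def by auto
  also have "\<dots> = {{Inl (if j \<le> k then k - j else k + n - j), Inr k}}"
  proof (intro equalityI subsetI)
    fix e assume "e \<in> {{Inl i, Inr ((i + j) mod n)} | i. i < n \<and> (i + j) mod n = k}"
    then obtain i where "i < n" "(i + j) mod n = k" "e = {Inl i, Inr ((i + j) mod n)}" by blast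
    then show "e \<in> {{Inl (if j \<le> k then k - j else k + n - j), Inr k}}"
      using inv_mod[OF _ assms(2,3,1), of i] by auto
  next
    fix e assume "e \<in> {{Inl (if j \<le> k then k - j else k + n - j), Inr k}}"
    moreover have "(if j \<le> k then k - j else k + n - j) < n" using assms by auto
    moreover have "((if j \<le> k then k - j else k + n - j) + j) mod n = k"
      using inv_mod[OF _ assms(2,3,1)] calculation(2) by blast
    ultimately show "e \<in> {{Inl i, Inr ((i + j) mod n)} | i. i < n \<and> (i + j) mod n = k}"
      by force
  qed
  finally show ?thesis .
qed

lemma card3: "a \<noteq> b \<Longrightarrow> a \<noteq> c \<Longrightarrow> b \<noteq> c \<Longrightarrow> card {a, b, c} = 3"
  by simp

lemma regular_Hn:
  assumes "3 < n"
  shows "regular 3 (Hn_vertices n) (Hn_edges n)"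
  unfolding regular_def
proof
  fix v assume "v \<in> Hn_vertices n"
  then consider (l) i where "i < n" "v = Inl i" | (r) k where "k < n" "v = Inr k"
    unfolding Hn_vertices_def by auto
  then show "degree (Hn_edges n) v = 3"
  proof cases
    case l
    have "{e \<in> Hn_edges n. v \<in> e} = {e \<in> Mj n 0. Inl i \<in> e} \<union> {e \<in> Mj n 1. Inl i \<in> e} \<union> {e \<in> Mj n 2. Inl i \<in> e}"
      unfolding Hn_edges_def l by auto
    also have "\<dots> = {{Inl i, Inr ((i + 0) mod n)}, {Inl i, Inr ((i + 1) mod n)}, {Inl i, Inr ((i + 2) mod n)}}"
      using Mj_Inl[of i n 0] Mj_Inl[of i n 1] Mj_Inl[of i n 2] l assms by (simp only: Un_insert_left Un_empty_left numeral_le_iff)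
    finally have eq: "{e \<in> Hn_edges n. v \<in> e} = {{Inl i, Inr ((i + 0) mod n)}, {Inl i, Inr ((i + 1) mod n)}, {Inl i, Inr ((i + 2) mod n)}}" .
    have d1: "(i + 0) mod n \<noteq> (i + 1) mod n" using modj[of i n 1] l assms by simp
    have d2: "(i + 0) mod n \<noteq> (i + 2) mod n" using modj[of i n 2] l assms by (simp split: if_splits)
    have d3: "(i + 1) mod n \<noteq> (i + 2) mod n" using modj[of i n 1] modj[of i n 2] l assms by (simp split: if_splits)
    show ?thesis unfolding degree_def eq
      by (rule card3) (use d1 d2 d3 in \<open>simp_all add: doubleton_eq_iff\<close>)
  next
    case r
    have "{e \<in> Hn_edges n. v \<in> e} = {e \<in> Mj n 0. Inr k \<in> e} \<union> {e \<in> Mj n 1. Inr k \<in> e} \<union> {e \<in> Mj n 2. Inr k \<in> e}"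
      unfolding Hn_edges_def r by auto
    also have "\<dots> = {{Inl (if 0 \<le> k then k - 0 else k + n - 0), Inr k}, {Inl (if 1 \<le> k then k - 1 else k + n - 1), Inr k},
        {Inl (if 2 \<le> k then k - 2 else k + n - 2), Inr k}}"
      using Mj_Inr[of k n 0] Mj_Inr[of k n 1] Mj_Inr[of k n 2] r assms
      by (simp only: Un_insert_left Un_empty_left numeral_le_iff)
    finally have eq: "{e \<in> Hn_edges n. v \<in> e} = {{Inl (if 0 \<le> k then k - 0 else k + n - 0), Inr k}, {Inl (if 1 \<le> k then k - 1 else k + n - 1), Inr k},
        {Inl (if 2 \<le> k then k - 2 else k + n - 2), Inr k}}" .
    have d1: "(if 0 \<le> k then k - 0 else k + n - 0) \<noteq> (if 1 \<le> k then k - 1 else k + n - 1)" using r assms by auto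
    have d2: "(if 0 \<le> k then k - 0 else k + n - 0) \<noteq> (if 2 \<le> k then k - 2 else k + n - 2)" using r assms by auto
    have d3: "(if 1 \<le> k then k - 1 else k + n - 1) \<noteq> (if 2 \<le> k then k - 2 else k + n - 2)" using r assms by auto
    show ?thesis unfolding degree_def eq
      by (rule card3) (use d1 d2 d3 in \<open>simp_all only: doubleton_eq_iff sum.inject sum.distinct simp_thms\<close>)
  qed
qed

lemma card_V: "card (Hn_vertices n) = 2 * n"
  unfolding Hn_vertices_def
  by (subst card_Un_disjoint) (auto simp: card_image)

lemma fin_E: "finite (Hn_edges n)"
  unfolding Hn_edges_def Mj_def by auto

lemma card_Mj: "card (Mj n j) \<le> n"
proof -
  have "Mj n j = (\<lambda>i. {Inl i, Inr ((i + j) mod n)}) ` {..<n}" unfolding Mj_def by auto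
  then show ?thesis using card_image_le[of "{..<n}"] by simp
qed

lemma card_E: "card (Hn_edges n) \<le> 3 * n"
  unfolding Hn_edges_def using card_Mj[of n] card_Un_le
  by (metis (no_types, lifting) add.commute add_le_mono le_trans mult_numeral_1 numeral_Bit1 numeral_One one_add_one semiring_norm(3) comm_semiring_class.distrib left_add_mult_distrib mult.commute)



lemma S1:
  fixes n d m m' :: nat
  assumes "odd n" "d = 1 \<or> d = 2" "m < n" "m' < n" "(m * d) mod n = (m' * d) mod n"
  shows "m = m'"
  using assms(2)
proof
  assume "d = 1" then show ?thesis using assms by simp
next
  assume d: "d = 2"
  have "(m * 2) mod n = (if m * 2 < n then m * 2 else m * 2 - n)" using mod2n[of "m*2" n] assms by simp
  moreover have "(m' * 2) mod n = (if m' * 2 < n then m' * 2 else m' * 2 - n)" using mod2n[of "m'*2" n] assms by simp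
  moreover have "(m * 2) mod n = (m' * 2) mod n" using assms d by simp
  ultimately have e: "(if m * 2 < n then m * 2 else m * 2 - n) = (if m' * 2 < n then m' * 2 else m' * 2 - n)"
    by simp
  obtain t where t: "n = 2 * t + 1" using assms(1) oddE by blast
  show ?thesis using e t by (simp split: if_splits; presburger)
qed

lemma S2:
  fixes n d i :: nat
  assumes "odd n" "d = 1 \<or> d = 2" "i < n"
  shows "\<exists>m<n. (m * d) mod n = i"
  using assms(2)
proof
  assume "d = 1" then show ?thesis using assms by auto
next
  assume d: "d = 2"
  show ?thesis
  proof (cases "even i")
    case True
    then show ?thesis using d assms by (intro exI[of _ "i div 2"]) auto
  next
    case False
    have "(i + n) div 2 * 2 = i + n" using False assms(1) by presburger
    moreover have "(i + n) div 2 < n" using assms by auto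
    moreover have "(i + n) mod n = i" using assms by simp
    ultimately show ?thesis using d by (intro exI[of _ "(i + n) div 2"]) auto
  qed
qed

lemma S3:
  fixes n d i :: nat
  assumes "odd n" "d = 1 \<or> d = 2" "i < n"
  shows "\<exists>m<n. ((m + 1) * d) mod n = i"
proof -
  obtain m' where m': "m' < n" "(m' * d) mod n = i" using S2[OF assms] by blast
  show ?thesis
  proof (cases m')
    case 0
    then have "((n - 1 + 1) * d) mod n = i" using m' assms by simp
    then show ?thesis using m' by (intro exI[of _ "n - 1"]) auto
  next
    case (Suc m)
    then show ?thesis using m' by (intro exI[of _ m]) auto
  qed
qed

lemma ham_Hn:
  fixes n j d :: nat
  assumes n: "odd n" "3 < n" and d: "d = 1 \<or> d = 2" and jd: "j + d \<le> 2"
  shows "hamilton_cycle (Hn_vertices n) (Hn_edges n) (Mj n j \<union> Mj n (j + d))"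
proof -
  define g where "g m = (if even m then Inl ((m div 2 * d) mod n) else Inr ((m div 2 * d + (j + d)) mod n))" for m
  define vs where "vs = map g [0..<2*n]"
  have len: "length vs = 2 * n" unfolding vs_def by simp
  have nth: "vs ! k = g k" if "k < 2 * n" for k unfolding vs_def using that by simp
  have npos: "0 < n" using n by simp
  have inr_cancel: "x = y" if "x < n" "y < n" "(x + (j + d)) mod n = (y + (j + d)) mod n" for x y
  proof -
    have A: "(x + (j + d)) mod n = (if x + (j + d) < n then x + (j + d) else x + (j + d) - n)"
      using modj[OF that(1), of "j+d"] jd n by simp
    have B: "(y + (j + d)) mod n = (if y + (j + d) < n then y + (j + d) else y + (j + d) - n)"
      using modj[OF that(2), of "j+d"] jd n by simp
    show ?thesis using A B that(3) that(1,2) by (simp split: if_splits)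
  qed
  have ginj: "inj_on g {0..<2*n}"
  proof (rule inj_onI)
    fix a b assume a: "a \<in> {0..<2*n}" and b: "b \<in> {0..<2*n}" and eq: "g a = g b"
    have ad: "a div 2 < n" "b div 2 < n" using a b by auto
    show "a = b"
    proof (cases "even a")
      case True
      with eq have "even b" unfolding g_def by (auto split: if_splits)
      with True eq have "(a div 2 * d) mod n = (b div 2 * d) mod n" unfolding g_def by auto
      then have "a div 2 = b div 2" using S1[OF n(1) d ad] by blast
      then show ?thesis using True \<open>even b\<close> by (metis dvd_mult_div_cancel)
    next
      case False
      with eq have "odd b" unfolding g_def by (auto split: if_splits)
      with False eq have "(a div 2 * d + (j + d)) mod n = (b div 2 * d + (j + d)) mod n" unfolding g_def by auto
      then have "((a div 2 * d) mod n + (j + d)) mod n = ((b div 2 * d) mod n + (j + d)) mod n"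
        by (metis mod_add_left_eq)
      then have "(a div 2 * d) mod n = (b div 2 * d) mod n" by (rule inr_cancel[rotated 2]) (use npos in auto)
      then have "a div 2 = b div 2" using S1[OF n(1) d ad] by blast
      then show ?thesis using False \<open>odd b\<close> by (metis odd_two_times_div_two_succ)
    qed
  qed
  have dist: "distinct vs" unfolding vs_def using ginj by (simp add: distinct_map)
  have sub: "set vs \<subseteq> Hn_vertices n"
    unfolding vs_def Hn_vertices_def g_def using npos by auto
  have setv: "set vs = Hn_vertices n"
  proof (rule card_subset_eq)
    show "finite (Hn_vertices n)" unfolding Hn_vertices_def by simp
    show "card (set vs) = card (Hn_vertices n)" using distinct_card[OF dist] len card_V by simp
  qed (rule sub)
  have next_even: "vs ! ((2 * m + 1) mod (2 * n)) = Inr ((m * d + (j + d)) mod n)" if "m < n" for m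
  proof -
    have "(2 * m + 1) mod (2 * n) = 2 * m + 1" using that by simp
    then show ?thesis using nth[of "2*m+1"] that unfolding g_def by simp
  qed
  have next_odd: "vs ! ((2 * m + 1 + 1) mod (2 * n)) = Inl (((m + 1) * d) mod n)" if "m < n" for m
  proof (cases "m + 1 < n")
    case True
    then have "(2 * m + 1 + 1) mod (2 * n) = 2 * (m + 1)" by simp
    then show ?thesis using nth[of "2*(m+1)"] True unfolding g_def by simp
  next
    case False
    then have "m + 1 = n" using that by simp
    then have "2 * m + 1 + 1 = 2 * n" by simp
    then have "(2 * m + 1 + 1) mod (2 * n) = 0" by simp
    then show ?thesis using nth[of 0] npos \<open>m + 1 = n\<close> unfolding g_def by simp
  qed
  have at_even: "vs ! (2 * m) = Inl ((m * d) mod n)" if "m < n" for m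
    using nth[of "2*m"] that unfolding g_def by simp
  have at_odd: "vs ! (2 * m + 1) = Inr ((m * d + (j + d)) mod n)" if "m < n" for m
    using nth[of "2*m+1"] that unfolding g_def by simp
  have Fe: "{{vs ! k, vs ! ((k + 1) mod length vs)} | k. k < length vs} = Mj n j \<union> Mj n (j + d)"
  proof (intro equalityI subsetI)
    fix e assume "e \<in> {{vs ! k, vs ! ((k + 1) mod length vs)} | k. k < length vs}"
    then obtain k where k: "k < 2 * n" "e = {vs ! k, vs ! ((k + 1) mod (2 * n))}" using len by auto
    show "e \<in> Mj n j \<union> Mj n (j + d)"
    proof (cases "even k")
      case True
      then obtain m where m: "k = 2 * m" by blast
      then have mn: "m < n" using k by simp
      have "e = {Inl ((m * d) mod n), Inr (((m * d) mod n + (j + d)) mod n)}"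
        using k m at_even[OF mn] next_even[OF mn] by (simp add: mod_add_left_eq)
      moreover have "(m * d) mod n < n" using npos by simp
      ultimately have "e \<in> Mj n (j + d)" unfolding Mj_def by blast
      then show ?thesis by blast
    next
      case False
      then obtain m where m: "k = 2 * m + 1" using oddE by blast
      then have mn: "m < n" using k by simp
      have "(m * d + (j + d)) mod n = ((m + 1) * d + j) mod n" by (simp add: algebra_simps)
      also have "\<dots> = (((m + 1) * d) mod n + j) mod n" by (simp add: mod_add_left_eq)
      finally have "e = {Inl (((m + 1) * d) mod n), Inr ((((m + 1) * d) mod n + j) mod n)}"
        using k m at_odd[OF mn] next_odd[OF mn] by (simp add: insert_commute)
      moreover have "((m + 1) * d) mod n < n" using npos by simp
      ultimately have "e \<in> Mj n j" unfolding Mj_def by blast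
      then show ?thesis by blast
    qed
  next
    fix e assume "e \<in> Mj n j \<union> Mj n (j + d)"
    then show "e \<in> {{vs ! k, vs ! ((k + 1) mod length vs)} | k. k < length vs}"
    proof
      assume "e \<in> Mj n j"
      then obtain i where i: "i < n" "e = {Inl i, Inr ((i + j) mod n)}" unfolding Mj_def by blast
      obtain m where m: "m < n" "((m + 1) * d) mod n = i" using S3[OF n(1) d i(1)] by blast
      have "(m * d + (j + d)) mod n = ((m + 1) * d + j) mod n" by (simp add: algebra_simps)
      also have "\<dots> = (((m + 1) * d) mod n + j) mod n" by (simp add: mod_add_left_eq)
      finally have "e = {vs ! (2 * m + 1), vs ! ((2 * m + 1 + 1) mod (2 * n))}"
        using i m at_odd[OF m(1)] next_odd[OF m(1)] by (simp add: insert_commute)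
      moreover have "2 * m + 1 < 2 * n" using m by simp
      ultimately show ?thesis unfolding len by blast
    next
      assume "e \<in> Mj n (j + d)"
      then obtain i where i: "i < n" "e = {Inl i, Inr ((i + (j + d)) mod n)}" unfolding Mj_def by blast
      obtain m where m: "m < n" "(m * d) mod n = i" using S2[OF n(1) d i(1)] by blast
      have "(i + (j + d)) mod n = (m * d + (j + d)) mod n" using m(2) by (metis mod_add_left_eq)
      then have "e = {vs ! (2 * m), vs ! ((2 * m + 1) mod (2 * n))}"
        using i m at_even[OF m(1)] next_even[OF m(1)] by (simp add: mod_add_left_eq)
      moreover have "2 * m < 2 * n" using m by simp
      ultimately show ?thesis unfolding len by blast
    qed
  qed
  have FE: "Mj n j \<union> Mj n (j + d) \<subseteq> Hn_edges n"
  proof -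
    have "j = 0 \<or> j = 1" "j + d = 1 \<or> j + d = 2" using jd d by auto
    then show ?thesis unfolding Hn_edges_def by (elim disjE; simp only:; blast)
  qed
  show ?thesis unfolding hamilton_cycle_def
    using FE dist setv len n Fe by (intro conjI exI[of _ vs]) auto
qed



lemma Mj_nonempty: "0 < n \<Longrightarrow> {Inl 0, Inr (j mod n)} \<in> Mj n j"
  unfolding Mj_def by force

lemma Mj_disj:
  assumes "j < j'" "j' \<le> 2" "3 < n"
  shows "Mj n j \<inter> Mj n j' = {}"
proof (rule ccontr)
  assume "Mj n j \<inter> Mj n j' \<noteq> {}"
  then obtain i i' where i: "i < n" "i' < n"
    "{Inl i, Inr ((i + j) mod n)} = ({Inl i', Inr ((i' + j') mod n)} :: (nat + nat) set)"
    unfolding Mj_def by blast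
  then have "i = i'" "(i + j) mod n = (i' + j') mod n" by (auto simp: doubleton_eq_iff)
  then have "(i + j) mod n = (i + j') mod n" by simp
  moreover have "(i + j) mod n = (if i + j < n then i + j else i + j - n)" using modj[of i n j] i assms by simp
  moreover have "(i + j') mod n = (if i + j' < n then i + j' else i + j' - n)" using modj[of i n j'] i assms by simp
  ultimately show False using assms i(1) by (simp split: if_splits)
qed

lemma sd_empty: "sym_diff {} X = X" "sym_diff X {} = X"
  unfolding sym_diff_def by auto

lemma sd_facts:
  assumes "A \<inter> B = {}" "A \<inter> C = {}" "B \<inter> C = {}"
  shows "sym_diff (A \<union> B) (A \<union> C) = B \<union> C" "sym_diff (A \<union> C) (A \<union> B) = B \<union> C"
    "sym_diff (A \<union> B) (B \<union> C) = A \<union> C" "sym_diff (B \<union> C) (A \<union> B) = A \<union> C"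
    "sym_diff (A \<union> C) (B \<union> C) = A \<union> B" "sym_diff (B \<union> C) (A \<union> C) = A \<union> B"
  using assms unfolding sym_diff_def by blast+

lemma ham_all:
  assumes n: "odd n" "3 < n" and j: "j \<in> {0,1,2}" "j' \<in> {0,1,2::nat}" "j \<noteq> j'"
  shows "hamilton_cycle (Hn_vertices n) (Hn_edges n) (Mj n j \<union> Mj n j')"
proof -
  have h01: "hamilton_cycle (Hn_vertices n) (Hn_edges n) (Mj n 0 \<union> Mj n 1)"
    using ham_Hn[OF n, of 1 0] by simp
  have h12: "hamilton_cycle (Hn_vertices n) (Hn_edges n) (Mj n 1 \<union> Mj n 2)"
    using ham_Hn[OF n, of 1 1] by (simp add: numeral_2_eq_2)
  have h02: "hamilton_cycle (Hn_vertices n) (Hn_edges n) (Mj n 0 \<union> Mj n 2)"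
    using ham_Hn[OF n, of 2 0] by (simp add: numeral_2_eq_2)
  from j show ?thesis using h01 h12 h02 by (auto simp: Un_commute)
qed

lemma code4:
  assumes n: "odd n" "3 < n"
  defines "A \<equiv> Mj n 0" and "B \<equiv> Mj n 1" and "C \<equiv> Mj n 2"
  shows "connectivity_code (Hn_vertices n) (Hn_edges n) {{}, A \<union> B, A \<union> C, B \<union> C}"
    and "card {{}, A \<union> B, A \<union> C, B \<union> C} = 4"
proof -
  have d: "A \<inter> B = {}" "A \<inter> C = {}" "B \<inter> C = {}"
    unfolding A_def B_def C_def using Mj_disj n by auto
  have ne: "A \<noteq> {}" "B \<noteq> {}" "C \<noteq> {}"
    unfolding A_def B_def C_def using Mj_nonempty[of n] n by auto
  have cAB: "connected_graph (Hn_vertices n) (A \<union> B)"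
    unfolding A_def B_def using ham_conn ham_all[OF n, of 0 1] by simp
  have cAC: "connected_graph (Hn_vertices n) (A \<union> C)"
    unfolding A_def C_def using ham_conn ham_all[OF n, of 0 2] by simp
  have cBC: "connected_graph (Hn_vertices n) (B \<union> C)"
    unfolding B_def C_def using ham_conn ham_all[OF n, of 1 2] by simp
  have sub: "A \<union> B \<union> C = Hn_edges n" unfolding A_def B_def C_def Hn_edges_def by simp
  have neq: "{} \<noteq> A \<union> B" "{} \<noteq> A \<union> C" "{} \<noteq> B \<union> C"
    "A \<union> B \<noteq> A \<union> C" "A \<union> B \<noteq> B \<union> C" "A \<union> C \<noteq> B \<union> C"
    using d ne by blast+
  show "card {{}, A \<union> B, A \<union> C, B \<union> C} = 4"
    using neq by simp
  show "connectivity_code (Hn_vertices n) (Hn_edges n) {{}, A \<union> B, A \<union> C, B \<union> C}"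
    unfolding connectivity_code_def
  proof (intro conjI ballI impI)
    fix F assume "F \<in> {{}, A \<union> B, A \<union> C, B \<union> C}"
    then show "F \<subseteq> Hn_edges n" using sub by blast
  next
    fix F1 F2 assume F1: "F1 \<in> {{}, A \<union> B, A \<union> C, B \<union> C}" and F2: "F2 \<in> {{}, A \<union> B, A \<union> C, B \<union> C}"
      and ne12: "F1 \<noteq> F2"
    from F1 F2 ne12 have "sym_diff F1 F2 \<in> {A \<union> B, A \<union> C, B \<union> C}"
      using sd_facts[OF d] by (elim insertE emptyE; simp only: sd_empty; simp)
    then show "connected_graph (Hn_vertices n) (sym_diff F1 F2)"
      using cAB cAC cBC by (elim insertE emptyE; simp)
  qed
qed


lemma pair_lb:
  assumes n: "3 < n" and cc: "connectivity_code (Hn_vertices n) (Hn_edges n) C"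
    and F: "F \<in> C" and G: "G \<in> C" and ne: "F \<noteq> G"
  shows "2 * n + (if even (card F) = even (card G) then 1 else 0) \<le> card (sym_diff F G) + 1"
proof -
  have FE: "F \<subseteq> Hn_edges n" "G \<subseteq> Hn_edges n" using cc F G unfolding connectivity_code_def by auto
  then have fin: "finite F" "finite G" using fin_E finite_subset by blast+
  have finsd: "finite (sym_diff F G)" using fin unfolding sym_diff_def by simp
  have con: "connected_graph (Hn_vertices n) (sym_diff F G)" using cc F G ne unfolding connectivity_code_def by blast
  have fV: "finite (Hn_vertices n)" unfolding Hn_vertices_def by simp
  have lb: "2 * n \<le> card (sym_diff F G) + 1" using conn_card[OF finsd con fV] card_V by simp
  have par: "card (sym_diff F G) + 2 * card (F \<inter> G) = card F + card G" using card_sd[OF fin] .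
  show ?thesis
  proof (cases "even (card F) = even (card G)")
    case True
    then have "even (card F + card G)" by auto
    then have "even (card (sym_diff F G) + 2 * card (F \<inter> G))" using par by simp
    then have "even (card (sym_diff F G))" by simp
    then obtain k where k: "card (sym_diff F G) = 2 * k" by blast
    have "2 * k \<noteq> 2 * n - 1" using n by presburger
    then have "card (sym_diff F G) \<noteq> 2 * n - 1" using k by simp
    then show ?thesis using True lb by simp
  next
    case False then show ?thesis using lb by simp
  qed
qed

lemma sum_ub:
  assumes "finite E" "F1 \<subseteq> E" "F2 \<subseteq> E" "F3 \<subseteq> E" "F4 \<subseteq> E" "F5 \<subseteq> E"
  shows "card (sym_diff F1 F2) + card (sym_diff F1 F3) + card (sym_diff F1 F4) + card (sym_diff F1 F5)
    + card (sym_diff F2 F3) + card (sym_diff F2 F4) + card (sym_diff F2 F5)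
    + card (sym_diff F3 F4) + card (sym_diff F3 F5) + card (sym_diff F4 F5) \<le> 6 * card E"
proof -
  let ?I = "\<lambda>A B e. if (e \<in> A) \<noteq> (e \<in> B) then 1 else (0::nat)"
  have "card (sym_diff F1 F2) + card (sym_diff F1 F3) + card (sym_diff F1 F4) + card (sym_diff F1 F5)
    + card (sym_diff F2 F3) + card (sym_diff F2 F4) + card (sym_diff F2 F5)
    + card (sym_diff F3 F4) + card (sym_diff F3 F5) + card (sym_diff F4 F5)
    = (\<Sum>e\<in>E. ?I F1 F2 e + ?I F1 F3 e + ?I F1 F4 e + ?I F1 F5 e + ?I F2 F3 e + ?I F2 F4 e
        + ?I F2 F5 e + ?I F3 F4 e + ?I F3 F5 e + ?I F4 F5 e)"
    using assms by (simp only: card_sd_sum sum.distrib)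
  also have "\<dots> \<le> (\<Sum>e\<in>E. 6)"
    by (rule sum_mono) (rule bool6)
  finally show ?thesis by simp
qed

lemma code_ub:
  assumes n: "odd n" "3 < n" and cc: "connectivity_code (Hn_vertices n) (Hn_edges n) C"
  shows "card C \<le> 4"
proof (rule ccontr)
  assume "\<not> card C \<le> 4"
  then have "Suc (Suc (Suc (Suc (Suc 0)))) \<le> card C" by simp
  from card_le_Suc_iff[THEN iffD1, OF this]
  obtain F1 C1 where c1: "C = insert F1 C1" "F1 \<notin> C1" "Suc (Suc (Suc (Suc 0))) \<le> card C1"
    by blast
  from card_le_Suc_iff[THEN iffD1, OF c1(3)]
  obtain F2 C2 where c2: "C1 = insert F2 C2" "F2 \<notin> C2" "Suc (Suc (Suc 0)) \<le> card C2"
    by blast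
  from card_le_Suc_iff[THEN iffD1, OF c2(3)]
  obtain F3 C3 where c3: "C2 = insert F3 C3" "F3 \<notin> C3" "Suc (Suc 0) \<le> card C3"
    by blast
  from card_le_Suc_iff[THEN iffD1, OF c3(3)]
  obtain F4 C4 where c4: "C3 = insert F4 C4" "F4 \<notin> C4" "Suc 0 \<le> card C4"
    by blast
  from card_le_Suc_iff[THEN iffD1, OF c4(3)]
  obtain F5 C5 where c5: "C4 = insert F5 C5" "F5 \<notin> C5"
    by blast
  have mem: "F1 \<in> C" "F2 \<in> C" "F3 \<in> C" "F4 \<in> C" "F5 \<in> C" using c1 c2 c3 c4 c5 by auto
  have dis: "F1 \<noteq> F2" "F1 \<noteq> F3" "F1 \<noteq> F4" "F1 \<noteq> F5" "F2 \<noteq> F3" "F2 \<noteq> F4" "F2 \<noteq> F5"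
    "F3 \<noteq> F4" "F3 \<noteq> F5" "F4 \<noteq> F5" using c1 c2 c3 c4 c5 by auto
  have sub: "F1 \<subseteq> Hn_edges n" "F2 \<subseteq> Hn_edges n" "F3 \<subseteq> Hn_edges n" "F4 \<subseteq> Hn_edges n" "F5 \<subseteq> Hn_edges n"
    using cc mem unfolding connectivity_code_def by auto
  note lb = pair_lb[OF n(2) cc]
  have l: "2 * n + (if even (card F1) = even (card F2) then 1 else 0) \<le> card (sym_diff F1 F2) + 1"
    "2 * n + (if even (card F1) = even (card F3) then 1 else 0) \<le> card (sym_diff F1 F3) + 1"
    "2 * n + (if even (card F1) = even (card F4) then 1 else 0) \<le> card (sym_diff F1 F4) + 1"
    "2 * n + (if even (card F1) = even (card F5) then 1 else 0) \<le> card (sym_diff F1 F5) + 1"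
    "2 * n + (if even (card F2) = even (card F3) then 1 else 0) \<le> card (sym_diff F2 F3) + 1"
    "2 * n + (if even (card F2) = even (card F4) then 1 else 0) \<le> card (sym_diff F2 F4) + 1"
    "2 * n + (if even (card F2) = even (card F5) then 1 else 0) \<le> card (sym_diff F2 F5) + 1"
    "2 * n + (if even (card F3) = even (card F4) then 1 else 0) \<le> card (sym_diff F3 F4) + 1"
    "2 * n + (if even (card F3) = even (card F5) then 1 else 0) \<le> card (sym_diff F3 F5) + 1"
    "2 * n + (if even (card F4) = even (card F5) then 1 else 0) \<le> card (sym_diff F4 F5) + 1"
    using lb[OF mem(1) mem(2) dis(1)] lb[OF mem(1) mem(3) dis(2)] lb[OF mem(1) mem(4) dis(3)]
      lb[OF mem(1) mem(5) dis(4)] lb[OF mem(2) mem(3) dis(5)] lb[OF mem(2) mem(4) dis(6)]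
      lb[OF mem(2) mem(5) dis(7)] lb[OF mem(3) mem(4) dis(8)] lb[OF mem(3) mem(5) dis(9)]
      lb[OF mem(4) mem(5) dis(10)] by simp_all
  note b = bool1[of "even (card F1)" "even (card F2)" "even (card F3)" "even (card F4)" "even (card F5)"]
  note u = sum_ub[OF fin_E sub]
  have e: "card (Hn_edges n) \<le> 3 * n" by (rule card_E)
  have n5: "5 \<le> n" using n by presburger
  show False using l b u e n5 by linarith
qed

theorem mainTheorem14:
  fixes n :: nat
  assumes "n > 3" and "odd n"
  shows "regular 3 (Hn_vertices n) (Hn_edges n)
    \<and> (\<forall>j\<in>{0,1,2}. \<forall>j'\<in>{0,1,2}. j \<noteq> j' \<longrightarrow>
          hamilton_cycle (Hn_vertices n) (Hn_edges n) (Mj n j \<union> Mj n j'))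
    \<and> m_code (Hn_vertices n) (Hn_edges n) = 4"
proof (intro conjI ballI impI)
  show "regular 3 (Hn_vertices n) (Hn_edges n)" using regular_Hn assms by simp
next
  fix j j' :: nat assume "j \<in> {0,1,2}" "j' \<in> {0,1,2}" "j \<noteq> j'"
  then show "hamilton_cycle (Hn_vertices n) (Hn_edges n) (Mj n j \<union> Mj n j')"
    using ham_all assms by blast
next
  let ?S = "{card C | C. connectivity_code (Hn_vertices n) (Hn_edges n) C}"
  have fin: "finite ?S"
  proof (rule finite_subset)
    show "?S \<subseteq> {..card (Pow (Hn_edges n))}"
    proof
      fix x assume "x \<in> ?S"
      then obtain C where C: "x = card C" "connectivity_code (Hn_vertices n) (Hn_edges n) C" by blast
      then have "C \<subseteq> Pow (Hn_edges n)" unfolding connectivity_code_def by auto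
      then have "card C \<le> card (Pow (Hn_edges n))" using fin_E by (intro card_mono) auto
      then show "x \<in> {..card (Pow (Hn_edges n))}" using C by simp
    qed
  qed simp
  have "4 \<in> ?S" using code4[OF assms(2,1)] by (metis (mono_tags, lifting) mem_Collect_eq)
  moreover have "\<And>y. y \<in> ?S \<Longrightarrow> y \<le> 4" using code_ub[OF assms(2,1)] by blast
  ultimately show "m_code (Hn_vertices n) (Hn_edges n) = 4"
    unfolding m_code_def using fin by (intro Max_eqI) auto
qed

end
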